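(* Let $x_0\in(0,1)$ and let $a,b:[0,1]\to\mathbb R$ with $a(x_0)=b(x_0)=0$, $a,b>0$ on $[0,1]\setminus\{x_0\}$, $a,b\in W^{1,1}(0,1)$, and suppose there exist $K_1,K_2\in(0,1)$ with $K_1+K_2<1$ such that $(x-x_0)a'\le K_1a$ and $(x-x_0)b'\le K_2b$ a.e. in $[0,1]$. Then there exists a constant $\overline C_{HP}>0$ such that \[\int_0^1\frac{u^2}{ab}\,dx\le\overline C_{HP}\int_0^1(u')^2dx\] for every $u\in H^1_{\frac1a}(0,1):=L^2_{\frac1a}(0,1)\cap H^1_0(0,1)$.
   Context: $L^2_{\frac1a}(0,1)=\{u\in L^2(0,1):\int_0^1u^2/a\,dx<\infty\}$. *)

theory Defs
  imports "HOL-Analysis.Analysis"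
begin

text \<open>g is (a representative of) the weak derivative of f in W^{1,1}(0,1):
  g is Lebesgue integrable on [0,1] and f is its indefinite integral
  (f is identified with its absolutely continuous representative).\<close>
definition W11_deriv :: "(real \<Rightarrow> real) \<Rightarrow> (real \<Rightarrow> real) \<Rightarrow> bool" where
  "W11_deriv f g \<longleftrightarrow>
     integrable (lebesgue_on {0..1}) g \<and>
     (\<forall>x\<in>{0..1}. f x = f 0 + integral\<^sup>L (lebesgue_on {0..x}) g)"

definition W11 :: "(real \<Rightarrow> real) \<Rightarrow> bool" where
  "W11 f \<longleftrightarrow> (\<exists>g. W11_deriv f g)"

definition H10_deriv :: "(real \<Rightarrow> real) \<Rightarrow> (real \<Rightarrow> real) \<Rightarrow> bool" where
  "H10_deriv u v \<longleftrightarrow>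
     v \<in> borel_measurable (lebesgue_on {0..1}) \<and>
     integrable (lebesgue_on {0..1}) v \<and>
     integrable (lebesgue_on {0..1}) (\<lambda>x. (v x)\<^sup>2) \<and>
     (\<forall>x\<in>{0..1}. u x = integral\<^sup>L (lebesgue_on {0..x}) v) \<and>
     u 1 = 0"

definition L2_weighted :: "(real \<Rightarrow> real) \<Rightarrow> (real \<Rightarrow> real) \<Rightarrow> bool" where
  "L2_weighted a u \<longleftrightarrow>
     integrable (lebesgue_on {0..1}) (\<lambda>x. (u x)\<^sup>2) \<and>
     integrable (lebesgue_on {0..1}) (\<lambda>x. (u x)\<^sup>2 / a x)"

end

theory Submission
  imports Defs
begin

lemma leb_abs_iff:
  fixes g :: "real \<Rightarrow> real"
  assumes "S \<in> sets lebesgue"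
  shows "integrable (lebesgue_on S) g \<longleftrightarrow> g absolutely_integrable_on S"
  using assms by (simp add: integrable_restrict_space set_integrable_def)

lemma leb_integral_eq:
  fixes g :: "real \<Rightarrow> real"
  assumes "integrable (lebesgue_on S) g" "S \<in> sets lebesgue"
  shows "integral\<^sup>L (lebesgue_on S) g = integral S g"
  using has_integral_integral_lebesgue_on[OF assms] by (simp add: integral_unique)

lemma leb_sub:
  fixes g :: "real \<Rightarrow> real"
  assumes "integrable (lebesgue_on {0..1}) g" "{s..t} \<subseteq> {0..1}"
  shows "integrable (lebesgue_on {s..t}) g"
proof -
  have "g absolutely_integrable_on {0..1}" using assms leb_abs_iff by auto
  then have "g absolutely_integrable_on {s..t}"
    using set_integrable_subset assms(2) by fastforce
  then show ?thesis using leb_abs_iff by auto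
qed

lemma leb_cont:
  fixes g :: "real \<Rightarrow> real"
  assumes "continuous_on {s..t} g"
  shows "integrable (lebesgue_on {s..t}) g \<and> integral\<^sup>L (lebesgue_on {s..t}) g = integral {s..t} g"
  using absolutely_integrable_continuous_real[OF assms] leb_abs_iff leb_integral_eq by auto


lemma alg: "(d::real) \<noteq> 0 \<Longrightarrow> K * (a / d) * p + g * (-K * (p / d)) = K * p / d * (a - g)"
  by (simp add: field_simps)

lemma gronwall_right:
  fixes \<phi> :: "real \<Rightarrow> real"
  assumes "x0 < s" "s \<le> T" "continuous_on {s..T} \<phi>" "0 < K"
    and le: "\<forall>t\<in>{s..T}. \<phi> t \<le> \<phi> s + K * integral {s..t} (\<lambda>r. \<phi> r / (r - x0))"
  shows "\<phi> T \<le> \<phi> s * ((T - x0)/(s - x0)) powr K"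
proof -
  define h where "h = (\<lambda>r. \<phi> r / (r - x0))"
  define G where "G = (\<lambda>t. \<phi> s + K * integral {s..t} h)"
  define H where "H = (\<lambda>t. G t * (t - x0) powr (-K))"
  have hc: "continuous_on {s..T} h" unfolding h_def
    using assms by (intro continuous_intros) auto
  have Gd: "(G has_real_derivative K * h t) (at t within {s..T})" if "t \<in> {s..T}" for t
    unfolding G_def
    using integral_has_vector_derivative[OF hc that]
    by (auto intro!: derivative_eq_intros simp: has_real_derivative_iff_has_vector_derivative)
  have Hd: "(H has_real_derivative (K * h t * (t - x0) powr (-K) + G t * (-K * (t - x0) powr (-K - 1))))
      (at t within {s..T})" if "t \<in> {s..T}" for t
    unfolding H_def using that assms
    by (auto intro!: derivative_eq_intros Gd simp: powr_diff)
  have Hcont: "continuous_on {s..T} H"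
    using Hd by (meson DERIV_continuous continuous_on_eq_continuous_within)
  have "H T \<le> H s"
  proof (rule DERIV_nonpos_imp_decreasing_open[OF assms(2) _ Hcont])
    fix t assume t: "s < t" "t < T"
    then have tt: "t \<in> {s..T}" by auto
    have d: "(H has_real_derivative (K * h t * (t - x0) powr (-K) + G t * (-K * (t - x0) powr (-K - 1))))
      (at t)" using Hd[OF tt] at_within_Icc_at[OF t] by simp
    have pos: "t - x0 > 0" using t assms by auto
    have "\<phi> t \<le> G t" using le tt unfolding G_def h_def by auto
    have eq: "(t - x0) powr (-K - 1) = (t - x0) powr (-K) / (t - x0)"
      using pos by (simp add: powr_diff)
    have "K * h t * (t - x0) powr (-K) + G t * (-K * (t - x0) powr (-K - 1))
        = K * (t - x0) powr (-K) / (t - x0) * (\<phi> t - G t)"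
      unfolding eq h_def by (rule alg) (use pos in auto)
    also have "\<dots> \<le> 0"
      using \<open>\<phi> t \<le> G t\<close> pos assms(4) by (intro mult_nonneg_nonpos) auto
    finally show "\<exists>y. DERIV H t :> y \<and> y \<le> 0" using d by blast
  qed
  have "\<phi> T \<le> G T" using le assms unfolding G_def h_def by auto
  also have "G T = H T * (T - x0) powr K"
    unfolding H_def using assms by (simp add: powr_minus field_simps)
  also have "\<dots> \<le> H s * (T - x0) powr K"
    using \<open>H T \<le> H s\<close> by (intro mult_right_mono) auto
  also have "H s = \<phi> s * (s - x0) powr (-K)" unfolding H_def G_def by simp
  finally show ?thesis
    using assms by (simp add: powr_divide powr_minus divide_simps)
qed

lemma alg2: "(d::real) \<noteq> 0 \<Longrightarrow> - (K * (a / d)) * p + g * (K * (p / d)) = K * p / d * (g - a)"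
  by (simp add: field_simps)

lemma gronwall_left:
  fixes \<phi> :: "real \<Rightarrow> real"
  assumes "T < x0" "S \<le> T" "continuous_on {S..T} \<phi>" "0 < K"
    and le: "\<forall>s\<in>{S..T}. \<phi> s \<le> \<phi> T + K * integral {s..T} (\<lambda>r. \<phi> r / (x0 - r))"
  shows "\<phi> S \<le> \<phi> T * ((x0 - S)/(x0 - T)) powr K"
proof -
  define h where "h = (\<lambda>r. \<phi> r / (x0 - r))"
  define G where "G = (\<lambda>s. \<phi> T + K * integral {s..T} h)"
  define H where "H = (\<lambda>s. G s * (x0 - s) powr (-K))"
  have hc: "continuous_on {S..T} h" unfolding h_def
    using assms by (intro continuous_intros) auto
  have Gd: "(G has_real_derivative - (K * h t)) (at t within {S..T})" if "t \<in> {S..T}" for t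
    unfolding G_def
    using integral_has_vector_derivative'[OF hc that]
    by (auto intro!: derivative_eq_intros simp: has_real_derivative_iff_has_vector_derivative)
  have Hd: "(H has_real_derivative (- (K * h t) * (x0 - t) powr (-K) + G t * (K * (x0 - t) powr (-K - 1))))
      (at t within {S..T})" if "t \<in> {S..T}" for t
    unfolding H_def using that assms
    by (auto intro!: derivative_eq_intros Gd simp: powr_diff)
  have Hcont: "continuous_on {S..T} H"
    using Hd by (meson DERIV_continuous continuous_on_eq_continuous_within)
  have "H S \<le> H T"
  proof (rule DERIV_nonneg_imp_increasing_open[OF assms(2) _ Hcont])
    fix t assume t: "S < t" "t < T"
    then have tt: "t \<in> {S..T}" by auto
    have d: "(H has_real_derivative (- (K * h t) * (x0 - t) powr (-K) + G t * (K * (x0 - t) powr (-K - 1))))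
      (at t)" using Hd[OF tt] at_within_Icc_at[OF t] by simp
    have pos: "x0 - t > 0" using t assms by auto
    have "\<phi> t \<le> G t" using le tt unfolding G_def h_def by auto
    have eq: "(x0 - t) powr (-K - 1) = (x0 - t) powr (-K) / (x0 - t)"
      using pos by (simp add: powr_diff)
    have "- (K * h t) * (x0 - t) powr (-K) + G t * (K * (x0 - t) powr (-K - 1))
        = K * (x0 - t) powr (-K) / (x0 - t) * (G t - \<phi> t)"
      unfolding eq h_def by (rule alg2) (use pos in auto)
    also have "\<dots> \<ge> 0"
      using \<open>\<phi> t \<le> G t\<close> pos assms(4) by (intro mult_nonneg_nonneg) auto
    finally show "\<exists>y. DERIV H t :> y \<and> y \<ge> 0" using d by blast
  qed
  have "\<phi> S \<le> G S" using le assms unfolding G_def h_def by auto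
  also have "G S = H S * (x0 - S) powr K"
    unfolding H_def using assms by (simp add: powr_minus field_simps)
  also have "\<dots> \<le> H T * (x0 - S) powr K"
    using \<open>H S \<le> H T\<close> by (intro mult_right_mono) auto
  also have "H T = \<phi> T * (x0 - T) powr (-K)" unfolding H_def G_def by simp
  finally show ?thesis
    using assms by (simp add: powr_divide powr_minus divide_simps)
qed
lemma lower_bound:
  fixes f f' :: "real \<Rightarrow> real" and x0 K :: real
  assumes x0: "x0 \<in> {0<..<1}" and f0: "f x0 = 0" and fpos: "\<forall>x\<in>{0..1} - {x0}. f x > 0"
    and W: "W11_deriv f f'" and K: "K \<in> {0<..<1}"
    and AE: "AE x in lebesgue_on {0..1}. (x - x0) * f' x \<le> K * f x"
  shows "\<exists>c>0. \<forall>x\<in>{0..1}. c * \<bar>x - x0\<bar> powr K \<le> f x"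
proof -
  have fi: "integrable (lebesgue_on {0..1}) f'" and fx: "\<forall>x\<in>{0..1}. f x = f 0 + integral\<^sup>L (lebesgue_on {0..x}) f'"
    using W unfolding W11_deriv_def by blast+
  have fc: "continuous_on {0..1} f"
  proof -
    have "continuous_on {0..1} (\<lambda>x. f 0 + integral\<^sup>L (lebesgue_on {0..x}) f')"
      using indefinite_integral_continuous_real[OF fi] by (intro continuous_intros)
    then show ?thesis
    proof (rule continuous_on_eq)
      fix x :: real assume "x \<in> {0..1}"
      then show "f 0 + integral\<^sup>L (lebesgue_on {0..x}) f' = f x" using fx by metis
    qed
  qed
  have diff: "f t - f s = integral\<^sup>L (lebesgue_on {s..t}) f'" if "0 \<le> s" "s \<le> t" "t \<le> 1" for s t
  proof -
    have "integrable (lebesgue_on {0..t}) f'" using leb_sub[OF fi] that by auto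
    from Equivalence_Measurable_On_Borel.integral_combine[OF this, of s] that
    have "integral\<^sup>L (lebesgue_on {0..t}) f' = integral\<^sup>L (lebesgue_on {0..s}) f' + integral\<^sup>L (lebesgue_on {s..t}) f'" by auto
    moreover have "f t = f 0 + integral\<^sup>L (lebesgue_on {0..t}) f'" using fx that by (metis atLeastAtMost_iff order_trans)
    moreover have "f s = f 0 + integral\<^sup>L (lebesgue_on {0..s}) f'" using fx that by (metis atLeastAtMost_iff order_trans)
    ultimately show ?thesis by linarith
  qed
  have AE': "AE x in lebesgue. x \<in> {0..1} \<longrightarrow> (x - x0) * f' x \<le> K * f x"
    using AE by (subst (asm) AE_restrict_space_iff) auto
  have AEsub: "AE x in lebesgue_on {s..t}. x \<in> {s..t} \<and> (x - x0) * f' x \<le> K * f x" if "0 \<le> s" "t \<le> 1" for s t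
    using AE' that by (subst AE_restrict_space_iff) (auto elim!: eventually_mono)
  have right: "f t - f s \<le> K * integral {s..t} (\<lambda>r. f r / (r - x0))" if "x0 < s" "s \<le> t" "t \<le> 1" for s t
  proof -
    have sub: "{s..t} \<subseteq> {0..1}" using that x0 by auto
    have hc: "continuous_on {s..t} (\<lambda>r. K * (f r / (r - x0)))"
      using that continuous_on_subset[OF fc sub] by (intro continuous_intros) auto
    have hc': "continuous_on {s..t} (\<lambda>r. (f r / (r - x0)))"
      using that continuous_on_subset[OF fc sub] by (intro continuous_intros) auto
    have "f t - f s = integral\<^sup>L (lebesgue_on {s..t}) f'" using diff that x0 by auto
    also have "\<dots> \<le> integral\<^sup>L (lebesgue_on {s..t}) (\<lambda>r. K * (f r / (r - x0)))"
    proof (rule integral_mono_lebesgue_on_AE)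
      show "integrable (lebesgue_on {s..t}) (\<lambda>r. K * (f r / (r - x0)))" using leb_cont[OF hc] by auto
      have s0: "0 \<le> s" using that x0 by auto
      show "AE x in lebesgue_on {s..t}. f' x \<le> K * (f x / (x - x0))"
        using AEsub[OF s0 that(3)]
      proof (elim eventually_mono)
        fix x assume "x \<in> {s..t} \<and> (x - x0) * f' x \<le> K * f x"
        then show "f' x \<le> K * (f x / (x - x0))" using that by (auto simp: pos_le_divide_eq mult.commute)
      qed
      show "AE x in lebesgue_on {s..t}. 0 \<le> K * (f x / (x - x0))"
      proof (rule AE_I2)
        fix x assume "x \<in> space (lebesgue_on {s..t})"
        then have xx: "x \<in> {0..1} - {x0}" "x > x0" using sub that by auto
        then have "f x > 0" using fpos by blast
        then show "0 \<le> K * (f x / (x - x0))" using K xx(2) by simp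
      qed
    qed auto
    also have "\<dots> = K * integral {s..t} (\<lambda>r. f r / (r - x0))"
      using leb_cont[OF hc'] integral_mult_right_zero[where c=K and M="lebesgue_on {s..t}" and f="\<lambda>r. f r / (r - x0)"]
      by (simp del: integral_mult_right_zero)
    finally show ?thesis .
  qed
  have left: "f s - f t \<le> K * integral {s..t} (\<lambda>r. f r / (x0 - r))" if "0 \<le> s" "s \<le> t" "t < x0" for s t
  proof -
    have sub: "{s..t} \<subseteq> {0..1}" using that x0 by auto
    have hc: "continuous_on {s..t} (\<lambda>r. K * (f r / (x0 - r)))"
      using that continuous_on_subset[OF fc sub] by (intro continuous_intros) auto
    have hc': "continuous_on {s..t} (\<lambda>r. (f r / (x0 - r)))"
      using that continuous_on_subset[OF fc sub] by (intro continuous_intros) auto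
    have "f s - f t = integral\<^sup>L (lebesgue_on {s..t}) (\<lambda>r. - f' r)" using diff[of s t] that x0 by auto
    also have "\<dots> \<le> integral\<^sup>L (lebesgue_on {s..t}) (\<lambda>r. K * (f r / (x0 - r)))"
    proof (rule integral_mono_lebesgue_on_AE)
      show "integrable (lebesgue_on {s..t}) (\<lambda>r. K * (f r / (x0 - r)))" using leb_cont[OF hc] by auto
      have t1: "t \<le> 1" using that x0 by auto
      show "AE x in lebesgue_on {s..t}. - f' x \<le> K * (f x / (x0 - x))"
        using AEsub[OF that(1) t1]
      proof (elim eventually_mono)
        fix x assume "x \<in> {s..t} \<and> (x - x0) * f' x \<le> K * f x"
        then show "- f' x \<le> K * (f x / (x0 - x))" using that by (auto simp: pos_le_divide_eq mult.commute algebra_simps)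
      qed
      show "AE x in lebesgue_on {s..t}. 0 \<le> K * (f x / (x0 - x))"
      proof (rule AE_I2)
        fix x assume "x \<in> space (lebesgue_on {s..t})"
        then have xx: "x \<in> {0..1} - {x0}" "x < x0" using sub that by auto
        then have "f x > 0" using fpos by blast
        then show "0 \<le> K * (f x / (x0 - x))" using K xx(2) by simp
      qed
    qed auto
    also have "\<dots> = K * integral {s..t} (\<lambda>r. f r / (x0 - r))"
      using leb_cont[OF hc'] integral_mult_right_zero[where c=K and M="lebesgue_on {s..t}" and f="\<lambda>r. f r / (x0 - r)"]
      by (simp del: integral_mult_right_zero)
    finally show ?thesis .
  qed
  define c1 where "c1 = f 1 / (1 - x0) powr K"
  define c2 where "c2 = f 0 / x0 powr K"
  have c1: "c1 > 0" using fpos x0 unfolding c1_def by auto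
  have c2: "c2 > 0" using fpos x0 unfolding c2_def by auto
  have R: "c1 * \<bar>s - x0\<bar> powr K \<le> f s" if "x0 < s" "s \<le> 1" for s
  proof -
    have "f 1 \<le> f s * ((1 - x0)/(s - x0)) powr K"
    proof (rule gronwall_right)
      show "continuous_on {s..1} f" using continuous_on_subset[OF fc] that x0 by auto
      show "\<forall>t\<in>{s..1}. f t \<le> f s + K * integral {s..t} (\<lambda>r. f r / (r - x0))"
        using right that by fastforce
    qed (use that K in auto)
    then show ?thesis using that x0 unfolding c1_def
      by (simp add: powr_divide divide_simps mult.commute)
  qed
  have L: "c2 * \<bar>t - x0\<bar> powr K \<le> f t" if "0 \<le> t" "t < x0" for t
  proof -
    have "f 0 \<le> f t * ((x0 - 0)/(x0 - t)) powr K"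
    proof (rule gronwall_left)
      show "continuous_on {0..t} f" using continuous_on_subset[OF fc] that x0 by auto
      show "\<forall>s\<in>{0..t}. f s \<le> f t + K * integral {s..t} (\<lambda>r. f r / (x0 - r))"
        using left that by fastforce
    qed (use that K in auto)
    then show ?thesis using that x0 unfolding c2_def
      by (simp add: powr_divide divide_simps mult.commute)
  qed
  show ?thesis
  proof (intro exI[of _ "min c1 c2"] conjI ballI)
    show "min c1 c2 > 0" using c1 c2 by auto
    fix x :: real assume x: "x \<in> {0..1}"
    consider "x = x0" | "x0 < x" | "x < x0" by linarith
    then show "min c1 c2 * \<bar>x - x0\<bar> powr K \<le> f x"
    proof cases
      case 1 then show ?thesis using f0 by simp
    next
      case 2
      have "min c1 c2 * \<bar>x - x0\<bar> powr K \<le> c1 * \<bar>x - x0\<bar> powr K" by (intro mult_right_mono) auto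
      moreover have "c1 * \<bar>x - x0\<bar> powr K \<le> f x" using R[of x] 2 x by simp
      ultimately show ?thesis by linarith
    next
      case 3
      have "min c1 c2 * \<bar>x - x0\<bar> powr K \<le> c2 * \<bar>x - x0\<bar> powr K" by (intro mult_right_mono) auto
      moreover have "c2 * \<bar>x - x0\<bar> powr K \<le> f x" using L[of x] 3 x by simp
      ultimately show ?thesis by linarith
    qed
  qed
qed

lemma powr_int:
  fixes x0 K :: real
  assumes "0 \<le> x0" "x0 \<le> 1" "K < 1"
  shows "(\<lambda>x. \<bar>x - x0\<bar> powr (-K)) integrable_on {0..1}"
proof (rule Henstock_Kurzweil_Integration.integrable_combine[where a=0 and c=x0 and b=1])
  show "(\<lambda>x. \<bar>x - x0\<bar> powr (-K)) integrable_on {x0..1}"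
  proof -
    have "((\<lambda>x. \<bar>x - x0\<bar> powr (-K)) has_integral
        ((\<lambda>x. (x - x0) powr (1 - K) / (1 - K)) 1 - (\<lambda>x. (x - x0) powr (1 - K) / (1 - K)) x0)) {x0..1}"
    proof (rule fundamental_theorem_of_calculus_interior)
      show "continuous_on {x0..1} (\<lambda>x. (x - x0) powr (1 - K) / (1 - K))"
        using assms by (intro continuous_intros continuous_on_powr') auto
      fix x assume x: "x \<in> {x0<..<1}"
      have "((\<lambda>x. (x - x0) powr (1 - K) / (1 - K)) has_real_derivative
          (1 - K) * (x - x0) powr (1 - K - 1) * 1 / (1 - K)) (at x)"
        using x by (auto intro!: derivative_eq_intros)
      moreover have "(1 - K) * (x - x0) powr (1 - K - 1) * 1 / (1 - K) = \<bar>x - x0\<bar> powr (-K)"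
        using x assms by auto
      ultimately show "((\<lambda>x. (x - x0) powr (1 - K) / (1 - K)) has_vector_derivative \<bar>x - x0\<bar> powr (-K)) (at x)"
        by (simp add: has_real_derivative_iff_has_vector_derivative)
    qed (use assms in auto)
    then show ?thesis by blast
  qed
  show "(\<lambda>x. \<bar>x - x0\<bar> powr (-K)) integrable_on {0..x0}"
  proof -
    have "((\<lambda>x. \<bar>x - x0\<bar> powr (-K)) has_integral
        ((\<lambda>x. - ((x0 - x) powr (1 - K) / (1 - K))) x0 - (\<lambda>x. - ((x0 - x) powr (1 - K) / (1 - K))) 0)) {0..x0}"
    proof (rule fundamental_theorem_of_calculus_interior)
      show "continuous_on {0..x0} (\<lambda>x. - ((x0 - x) powr (1 - K) / (1 - K)))"
        using assms by (intro continuous_intros continuous_on_powr') auto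
      fix x assume x: "x \<in> {0<..<x0}"
      have "((\<lambda>x. - ((x0 - x) powr (1 - K) / (1 - K))) has_real_derivative
          - ((1 - K) * (x0 - x) powr (1 - K - 1) * (0 - 1) / (1 - K))) (at x)"
        using x by (auto intro!: derivative_eq_intros)
      moreover have "- ((1 - K) * (x0 - x) powr (1 - K - 1) * (0 - 1) / (1 - K)) = \<bar>x - x0\<bar> powr (-K)"
        using x assms by auto
      ultimately show "((\<lambda>x. - ((x0 - x) powr (1 - K) / (1 - K))) has_vector_derivative \<bar>x - x0\<bar> powr (-K)) (at x)"
        by (simp add: has_real_derivative_iff_has_vector_derivative)
    qed (use assms in auto)
    then show ?thesis by blast
  qed
qed (use assms in auto)

lemma abs_le_sq: "(l::real) > 0 \<Longrightarrow> \<bar>v\<bar> \<le> l / 2 + v\<^sup>2 / (2 * l)"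
proof -
  assume l: "l > 0"
  have "0 \<le> (\<bar>v\<bar> - l)\<^sup>2" by simp
  then have "2 * l * \<bar>v\<bar> \<le> l\<^sup>2 + v\<^sup>2" by (simp add: power2_eq_square algebra_simps)
  then show ?thesis using l by (simp add: field_simps power2_eq_square)
qed

lemma pointwise_bound:
  fixes u u' :: "real \<Rightarrow> real"
  assumes H: "H10_deriv u u'" and x: "x \<in> {0..1}"
  shows "(u x)\<^sup>2 \<le> integral\<^sup>L (lebesgue_on {0..1}) (\<lambda>x. (u' x)\<^sup>2)"
proof -
  define I where "I = integral\<^sup>L (lebesgue_on {0..1}) (\<lambda>x. (u' x)\<^sup>2)"
  have ui: "integrable (lebesgue_on {0..1}) u'" and u2i: "integrable (lebesgue_on {0..1}) (\<lambda>x. (u' x)\<^sup>2)"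
    and ux: "u x = integral\<^sup>L (lebesgue_on {0..x}) u'"
    using H x unfolding H10_deriv_def by blast+
  have m1: "measure (lebesgue_on {0..1}) {0..1::real} = 1" by (simp add: measure_restrict_space)
  have I0: "I \<ge> 0" unfolding I_def by (intro integral_nonneg_AE) auto
  have uix: "integrable (lebesgue_on {0..x}) u'" using leb_sub[OF ui] x by auto
  have bnd: "\<bar>u x\<bar> \<le> l / 2 + I / (2 * l)" if l: "l > 0" for l
  proof -
    have "\<bar>u x\<bar> \<le> integral\<^sup>L (lebesgue_on {0..x}) (\<lambda>r. \<bar>u' r\<bar>)"
      unfolding ux by (rule integral_abs_bound)
    also have "\<dots> \<le> integral\<^sup>L (lebesgue_on {0..1}) (\<lambda>r. l / 2 + (u' r)\<^sup>2 / (2 * l))"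
    proof (rule integral_mono_lebesgue_on_AE)
      show "integrable (lebesgue_on {0..1}) (\<lambda>r. l / 2 + (u' r)\<^sup>2 / (2 * l))"
        using u2i by (intro Bochner_Integration.integrable_add integrable_divide) (auto simp: finite_measure_lebesgue_on finite_measure.integrable_const)
      show "AE r in lebesgue_on {0..x}. \<bar>u' r\<bar> \<le> l / 2 + (u' r)\<^sup>2 / (2 * l)"
        using abs_le_sq[OF l] by auto
      show "AE r in lebesgue_on {0..1}. 0 \<le> l / 2 + (u' r)\<^sup>2 / (2 * l)"
        using l by auto
    qed (use x in auto)
    also have "\<dots> = l / 2 + I / (2 * l)"
      using u2i m1 unfolding I_def
      by (subst Bochner_Integration.integral_add) (auto simp: finite_measure_lebesgue_on finite_measure.integrable_const)
    finally show ?thesis .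
  qed
  show ?thesis
  proof (cases "I = 0")
    case True
    have "\<bar>u x\<bar> \<le> 0"
    proof (rule ccontr)
      assume "\<not> \<bar>u x\<bar> \<le> 0"
      then have "\<bar>u x\<bar> > 0" by simp
      from bnd[OF this] True this show False by simp
    qed
    then show ?thesis using True unfolding I_def by simp
  next
    case False
    then have Ip: "I > 0" using I0 by simp
    have "\<bar>u x\<bar> \<le> sqrt I / 2 + I / (2 * sqrt I)" using bnd Ip by simp
    also have "\<dots> = sqrt I"
      using Ip by (simp add: field_simps)
    finally have "\<bar>u x\<bar> \<le> sqrt I" .
    then have "\<bar>u x\<bar>\<^sup>2 \<le> (sqrt I)\<^sup>2" by (intro power_mono) auto
    then show ?thesis using I0 unfolding I_def by simp
  qed
qed

theorem lemma2p7:
  fixes a b a' b' :: "real \<Rightarrow> real" and x0 K1 K2 :: real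
  assumes "x0 \<in> {0<..<1}"
    and "a x0 = 0" and "b x0 = 0"
    and "\<forall>x\<in>{0..1} - {x0}. a x > 0" and "\<forall>x\<in>{0..1} - {x0}. b x > 0"
    and "W11_deriv a a'" and "W11_deriv b b'"
    and "K1 \<in> {0<..<1}" and "K2 \<in> {0<..<1}" and "K1 + K2 < 1"
    and "AE x in lebesgue_on {0..1}. (x - x0) * a' x \<le> K1 * a x"
    and "AE x in lebesgue_on {0..1}. (x - x0) * b' x \<le> K2 * b x"
  shows "\<exists>C>0. \<forall>u u'. H10_deriv u u' \<and> L2_weighted a u \<longrightarrow>
           (\<integral>\<^sup>+ x. ennreal ((u x)\<^sup>2 / (a x * b x)) \<partial>lebesgue_on {0..1})
             \<le> ennreal C * (\<integral>\<^sup>+ x. ennreal ((u' x)\<^sup>2) \<partial>lebesgue_on {0..1})"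
proof -
  note A = assms
  obtain c1 where c1: "c1 > 0" "\<forall>x\<in>{0..1}. c1 * \<bar>x - x0\<bar> powr K1 \<le> a x"
    using lower_bound[OF A(1) A(2) A(4) A(6) A(8) A(11)] by blast
  obtain c2 where c2: "c2 > 0" "\<forall>x\<in>{0..1}. c2 * \<bar>x - x0\<bar> powr K2 \<le> b x"
    using lower_bound[OF A(1) A(3) A(5) A(7) A(9) A(12)] by blast
  define K where "K = K1 + K2"
  have K: "K < 1" "K > 0" using A(8,9,10) unfolding K_def by auto
  define w where "w = (\<lambda>x. \<bar>x - x0\<bar> powr (-K) / (c1 * c2))"
  have w0: "w x \<ge> 0" for x unfolding w_def using c1 c2 by auto
  have "w integrable_on {0..1}"
    unfolding w_def using powr_int[of x0 K] A(1) K by (intro integrable_on_divide) auto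
  then have "w absolutely_integrable_on {0..1}"
    using w0 by (intro nonnegative_absolutely_integrable_1) auto
  then have wi: "integrable (lebesgue_on {0..1}) w" using leb_abs_iff by auto
  define W where "W = integral\<^sup>L (lebesgue_on {0..1}) w"
  have W0: "W \<ge> 0" unfolding W_def using w0 by (intro integral_nonneg_AE) auto
  have Wn: "(\<integral>\<^sup>+ x. ennreal (w x) \<partial>lebesgue_on {0..1}) = ennreal W"
    unfolding W_def using wi w0 by (intro nn_integral_eq_integral) auto
  show ?thesis
  proof (intro exI[of _ "W + 1"] conjI allI impI)
    show "W + 1 > 0" using W0 by simp
    fix u u' :: "real \<Rightarrow> real"
    assume uu: "H10_deriv u u' \<and> L2_weighted a u"
    then have H: "H10_deriv u u'" by blast
    define I where "I = integral\<^sup>L (lebesgue_on {0..1}) (\<lambda>x. (u' x)\<^sup>2)"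
    have u2i: "integrable (lebesgue_on {0..1}) (\<lambda>x. (u' x)\<^sup>2)"
      using H unfolding H10_deriv_def by blast
    have I0: "I \<ge> 0" unfolding I_def by (intro integral_nonneg_AE) auto
    have In: "(\<integral>\<^sup>+ x. ennreal ((u' x)\<^sup>2) \<partial>lebesgue_on {0..1}) = ennreal I"
      unfolding I_def using u2i by (intro nn_integral_eq_integral) auto
    have ptw: "ennreal ((u x)\<^sup>2 / (a x * b x)) \<le> ennreal (I * w x)" if x: "x \<in> space (lebesgue_on {0..1})" for x
    proof (cases "x = x0")
      case True
      then show ?thesis using A(2) by simp
    next
      case False
      define d where "d = \<bar>x - x0\<bar>"
      have d: "d > 0" using False unfolding d_def by auto
      have xx: "x \<in> {0..1}" using x by simp
      have ab: "c1 * d powr K1 \<le> a x" "c2 * d powr K2 \<le> b x" using c1 c2 xx unfolding d_def by auto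
      have pos: "0 < c1 * c2 * d powr K" using c1 c2 d by auto
      have "c1 * c2 * d powr K = (c1 * d powr K1) * (c2 * d powr K2)"
        unfolding K_def by (simp add: powr_add)
      also have "\<dots> \<le> a x * b x"
      proof (rule mult_mono)
        show "0 \<le> a x" using ab(1) c1 d by (smt (verit) powr_gt_zero mult_pos_pos)
        show "0 \<le> c2 * d powr K2" using c2 d by simp
      qed (use ab in auto)
      finally have le: "c1 * c2 * d powr K \<le> a x * b x" .
      have u2: "(u x)\<^sup>2 \<le> I" unfolding I_def by (rule pointwise_bound[OF H xx])
      have "(u x)\<^sup>2 / (a x * b x) \<le> I / (c1 * c2 * d powr K)"
        using u2 le pos I0 by (intro frac_le) auto
      also have "\<dots> = I * w x" unfolding w_def d_def[symmetric] using d
        by (simp add: powr_minus field_simps)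
      finally show ?thesis by (rule ennreal_leI)
    qed
    have "(\<integral>\<^sup>+ x. ennreal ((u x)\<^sup>2 / (a x * b x)) \<partial>lebesgue_on {0..1})
        \<le> (\<integral>\<^sup>+ x. ennreal (I * w x) \<partial>lebesgue_on {0..1})"
      using ptw by (intro nn_integral_mono) auto
    also have "\<dots> = (\<integral>\<^sup>+ x. ennreal I * ennreal (w x) \<partial>lebesgue_on {0..1})"
      by (intro nn_integral_cong) (simp add: ennreal_mult I0 w0)
    also have "\<dots> = ennreal I * ennreal W"
    proof -
      have wm: "(\<lambda>x. ennreal (w x)) \<in> borel_measurable (lebesgue_on {0..1})"
        using borel_measurable_integrable[OF wi] by measurable
      show ?thesis by (subst nn_integral_cmult[OF wm]) (simp add: Wn)
    qed
    also have "\<dots> \<le> ennreal (W + 1) * ennreal I"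
      by (simp add: mult.commute mult_left_mono W0 ennreal_leI)
    finally show "(\<integral>\<^sup>+ x. ennreal ((u x)\<^sup>2 / (a x * b x)) \<partial>lebesgue_on {0..1})
             \<le> ennreal (W + 1) * (\<integral>\<^sup>+ x. ennreal ((u' x)\<^sup>2) \<partial>lebesgue_on {0..1})"
      unfolding In .
  qed
qed
end
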